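(* For all integers $m\ge 0$ and $n>1$, \[N_{\le m}(n)-M_{\le m}(n)=2\bigl(p(-m,n)-q(m,n)\bigr).\]
   Context: For a partition $\lambda$ with parts $\lambda_1\ge\cdots\ge\lambda_\ell>0$, its rank is $\lambda_1-\ell$. Its crank is $\lambda_1$ if $\lambda$ has no part equal to $1$, and otherwise is (the number of parts larger than the number of ones) minus (the number of ones). $N(m,n)$ (resp. $M(m,n)$) is the number of partitions of $n$ with rank (resp. crank) $m$; $N_{\le m}(n)=\sum_{|r|\le m}N(r,n)$, $M_{\le m}(n)=\sum_{|r|\le m}M(r,n)$. The rank-set of $\lambda$ is the infinite sequence $[-\lambda_1,\,1-\lambda_2,\,\dots,\,\ell-1-\lambda_\ell,\,\ell,\,\ell+1,\,\ell+2,\dots]$; "$m$ appears in the rank-set" means $m$ equals one of its entries. $q(m,n)$ is the number of partitions of $n$ whose rank-set contains $m$, and $p(-m,n)$ is the number of partitions of $n$ with rank $\ge -m$. *)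

theory Defs
  imports Main
begin

definition partitions :: "nat \<Rightarrow> nat list set" where
  "partitions n = {xs. sorted_wrt (\<ge>) xs \<and> (\<forall>x\<in>set xs. 0 < x) \<and> sum_list xs = n}"

definition rank :: "nat list \<Rightarrow> int" where
  "rank xs = (if xs = [] then 0 else int (hd xs) - int (length xs))"

definition crank :: "nat list \<Rightarrow> int" where
  "crank xs = (let w = count_list xs 1 in
     if w = 0 then (if xs = [] then 0 else int (hd xs))
     else int (length (filter (\<lambda>x. x > w) xs)) - int w)"

text \<open>m appears in the rank-set
  [-lambda_1, 1-lambda_2, ..., l-1-lambda_l, l, l+1, l+2, ...]
  (entry k-1-lambda_k for k = 1..l, written with 0-based index i = k-1).\<close>
definition in_rank_set :: "int \<Rightarrow> nat list \<Rightarrow> bool" where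
  "in_rank_set m xs \<longleftrightarrow>
     (\<exists>i<length xs. m = int i - int (xs ! i)) \<or> m \<ge> int (length xs)"

definition N :: "int \<Rightarrow> nat \<Rightarrow> nat" where
  "N m n = card {xs \<in> partitions n. rank xs = m}"

definition M :: "int \<Rightarrow> nat \<Rightarrow> nat" where
  "M m n = card {xs \<in> partitions n. crank xs = m}"

definition N_le :: "int \<Rightarrow> nat \<Rightarrow> nat" where
  "N_le m n = (\<Sum>r\<in>{-m..m}. N r n)"

definition M_le :: "int \<Rightarrow> nat \<Rightarrow> nat" where
  "M_le m n = (\<Sum>r\<in>{-m..m}. M r n)"

definition q :: "int \<Rightarrow> nat \<Rightarrow> nat" where
  "q m n = card {xs \<in> partitions n. in_rank_set m xs}"

text \<open>p(-m,n) as written in the paper: partitions of n with rank \<ge> -m.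
  Here the first argument is the bound itself, so p(-m,n) is p_rank_ge (-m) n.\<close>
definition p_rank_ge :: "int \<Rightarrow> nat \<Rightarrow> nat" where
  "p_rank_ge k n = card {xs \<in> partitions n. rank xs \<ge> k}"

end

theory Submission
  imports Defs "HOL-Library.Multiset"
begin


definition mp :: "nat \<Rightarrow> nat multiset set" where
  "mp n = {K. (\<forall>x\<in>#K. 0 < x) \<and> sum_mset K = n}"
definition cgt :: "nat \<Rightarrow> nat multiset \<Rightarrow> nat" where
  "cgt s K = size (filter_mset (\<lambda>x. s < x) K)"
definition cge :: "nat \<Rightarrow> nat multiset \<Rightarrow> nat" where
  "cge s K = size (filter_mset (\<lambda>x. s \<le> x) K)"
definition mx :: "nat multiset \<Rightarrow> nat" where
  "mx K = (if K = {#} then 0 else Max (set_mset K))"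
definition mrank :: "nat multiset \<Rightarrow> int" where
  "mrank K = int (mx K) - int (size K)"
definition mcrank :: "nat multiset \<Rightarrow> int" where
  "mcrank K = (let w = count K 1 in if w = 0 then int (mx K) else int (cgt w K) - int w)"
definition mrs :: "int \<Rightarrow> nat multiset \<Rightarrow> bool" where
  "mrs m K \<longleftrightarrow> (\<exists>s. int (cgt s K) \<le> int s + m \<and> (s = 0 \<or> int s + m < int (cge s K)))"

lemma size_filter_mono: "(\<And>x. P x \<Longrightarrow> Q x) \<Longrightarrow> size (filter_mset P K) \<le> size (filter_mset Q K)"
  by (induction K) auto

lemma cge_Suc: "cge (Suc s) K = cgt s K"
  unfolding cge_def cgt_def by (induction K) auto

lemma cge_cgt: "cge s K = cgt s K + count K s"
proof -
  have "filter_mset (\<lambda>x. s \<le> x) K = filter_mset (\<lambda>x. s < x) K + filter_mset (\<lambda>x. x = s) K"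
    by (induction K) auto
  then show ?thesis unfolding cge_def cgt_def by (simp add: filter_eq_replicate_mset)
qed

lemma cge_0: "cge 0 K = size K" unfolding cge_def by (induction K) auto

lemma cgt_0: "\<forall>x\<in>#K. 0 < x \<Longrightarrow> cgt 0 K = size K"
  unfolding cgt_def by (induction K) auto

lemma cge_1: "\<forall>x\<in>#K. 0 < x \<Longrightarrow> cge 1 K = size K"
  using cgt_0 cge_Suc by (metis One_nat_def)

lemma cge_mono: "s \<le> s' \<Longrightarrow> cge s' K \<le> cge s K"
  unfolding cge_def by (rule size_filter_mono) auto

lemma cgt_mono: "s \<le> s' \<Longrightarrow> cgt s' K \<le> cgt s K"
  unfolding cgt_def by (rule size_filter_mono) auto

lemma cgt_le_cge: "s < s' \<Longrightarrow> cge s' K \<le> cgt s K"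
  unfolding cge_def cgt_def by (rule size_filter_mono) auto

lemma cge_le_size: "cge s K \<le> size K" unfolding cge_def by simp
lemma cgt_le_size: "cgt s K \<le> size K" unfolding cgt_def by simp

lemma cgt_add: "cgt s (add_mset x K) = cgt s K + (if s < x then 1 else 0)"
  unfolding cgt_def by simp
lemma cge_add: "cge s (add_mset x K) = cge s K + (if s \<le> x then 1 else 0)"
  unfolding cge_def by simp
lemma cgt_plus: "cgt s (K + L) = cgt s K + cgt s L"
  unfolding cgt_def by simp
lemma cge_plus: "cge s (K + L) = cge s K + cge s L"
  unfolding cge_def by simp
lemma cgt_rep1: "1 \<le> s \<Longrightarrow> cgt s (replicate_mset k 1) = 0"
  unfolding cgt_def by (induction k) auto
lemma cge_rep1: "2 \<le> s \<Longrightarrow> cge s (replicate_mset k 1) = 0"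
  unfolding cge_def by (induction k) auto
lemma cgt_minus: "x \<in># K \<Longrightarrow> cgt s K = cgt s (K - {#x#}) + (if s < x then 1 else 0)"
  by (metis cgt_add insert_DiffM)
lemma cge_minus: "x \<in># K \<Longrightarrow> cge s K = cge s (K - {#x#}) + (if s \<le> x then 1 else 0)"
  by (metis cge_add insert_DiffM)

lemma cgt_1: "\<forall>x\<in>#K. 0 < x \<Longrightarrow> cgt 1 K + count K 1 = size K"
  using cge_cgt[of 1 K] cge_1[of K] by simp

lemma mx_ge: "x \<in># K \<Longrightarrow> x \<le> mx K"
  unfolding mx_def by auto
lemma mx_in: "K \<noteq> {#} \<Longrightarrow> mx K \<in># K"
  unfolding mx_def by auto
lemma mx_eqI: "a \<in># K \<Longrightarrow> (\<forall>x\<in>#K. x \<le> a) \<Longrightarrow> mx K = a"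
  by (metis antisym empty_iff mx_ge mx_in set_mset_empty)

lemma finite_mp: "finite (mp n)"
proof -
  have sz: "size K \<le> sum_mset K" if "\<forall>x\<in>#K. 0 < x" for K :: "nat multiset"
    using that by (induction K) (auto simp: Suc_le_eq)
  have el: "x \<le> sum_mset K" if "x \<in># K" for x and K :: "nat multiset"
    using that by (metis le_add1 sum_mset.remove)
  have "mp n \<subseteq> mset ` {xs. set xs \<subseteq> {..n} \<and> length xs \<le> n}"
  proof
    fix K assume K: "K \<in> mp n"
    obtain xs where xs: "mset xs = K" using ex_mset by blast
    have "set xs \<subseteq> {..n}" using K el unfolding mp_def by (auto simp flip: xs)
    moreover have "length xs \<le> n" using K sz[of K] unfolding mp_def by (auto simp flip: xs)
    ultimately show "K \<in> mset ` {xs. set xs \<subseteq> {..n} \<and> length xs \<le> n}" using xs by blast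
  qed
  then show ?thesis by (rule finite_subset) (intro finite_imageI finite_lists_length_le, simp)
qed



definition ptP :: "int \<Rightarrow> nat multiset \<Rightarrow> nat \<Rightarrow> bool" where
  "ptP m K s \<longleftrightarrow> 1 \<le> s \<and> int (cgt s K) \<le> int s + m \<and> int s + m < int (cge s K)"
definition QP :: "int \<Rightarrow> nat multiset \<Rightarrow> nat \<Rightarrow> bool" where
  "QP m K s \<longleftrightarrow> 1 \<le> s \<and> s \<le> count K 1 \<and> int (cgt s K) \<le> int s + m \<and>
     (if s = 1 then int s + m < int (cge s K) else int s + m \<le> int (cge s K))"

lemma ptP_unique: "ptP m K s \<Longrightarrow> ptP m K s' \<Longrightarrow> s = s'"
proof (rule ccontr)
  assume a: "ptP m K s" "ptP m K s'" "s \<noteq> s'"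
  have *: False if "ptP m K a" "ptP m K b" "a < b" for a b
    using that cgt_le_cge[of a b K] unfolding ptP_def by linarith
  show False using a *[of s s'] *[of s' s] by linarith
qed

lemma QP_unique: "QP m K s \<Longrightarrow> QP m K s' \<Longrightarrow> s = s'"
proof (rule ccontr)
  assume a: "QP m K s" "QP m K s'" "s \<noteq> s'"
  have *: False if "QP m K a" "QP m K b" "a < b" for a b
  proof -
    have "b \<noteq> 1" using that unfolding QP_def by auto
    then show False using that cgt_le_cge[of a b K] unfolding QP_def
      by (auto split: if_splits)
  qed
  show False using a *[of s s'] *[of s' s] by linarith
qed

lemma split_good:
  assumes K: "K \<in> mp n" and P: "ptP m K s"
  defines "Z \<equiv> K - {#s#} + replicate_mset s 1"
  shows "Z \<in> mp n" "1 \<le> count Z 1" "m + 2 \<le> int (size Z)" "mcrank Z \<le> m" "QP m Z s"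
    "Z - replicate_mset s 1 + {#s#} = K"
proof -
  have s1: "1 \<le> s" using P unfolding ptP_def by auto
  have "cgt s K < cge s K" using P unfolding ptP_def by linarith
  then have sK: "s \<in># K" using cge_cgt[of s K] by auto
  have pos: "\<forall>x\<in>#K. 0 < x" and sum: "sum_mset K = n" using K unfolding mp_def by auto
  have "sum_mset Z = sum_mset (K - {#s#}) + s" unfolding Z_def
    by (simp only: sum_mset.union) simp
  also have "\<dots> = n" using sum sum_mset.remove[OF sK] by simp
  finally have "sum_mset Z = n" .
  moreover have "\<forall>x\<in>#Z. 0 < x"
  proof
    fix x assume "x \<in># Z"
    then have "x \<in># K - {#s#} \<or> x \<in># replicate_mset s 1" unfolding Z_def by (simp only: union_iff)
    then show "0 < x" using pos by (auto dest: in_diffD split: if_splits)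
  qed
  ultimately show "Z \<in> mp n" unfolding mp_def by simp
  have cZ: "count Z 1 = count K 1 - (if s = 1 then 1 else 0) + s"
    unfolding Z_def by auto
  show c1: "1 \<le> count Z 1" using cZ s1 by auto
  have "0 < size K" using sK by (metis empty_iff neq0_conv set_mset_empty size_eq_0_iff_empty)
  then have szZ: "size Z = size K - 1 + s" unfolding Z_def using sK by (simp add: size_Diff_singleton)
  have "cge s K \<le> size K" by (rule cge_le_size)
  then show "m + 2 \<le> int (size Z)" using P szZ s1 unfolding ptP_def by linarith
  have cgtZ: "cgt x Z = cgt x (K - {#s#})" if "1 \<le> x" for x
    unfolding Z_def using cgt_plus[of x "K - {#s#}" "replicate_mset s 1"] cgt_rep1[OF that, of s] by simp
  have cgtZs: "cgt s Z = cgt s K" using cgtZ[OF s1] cgt_minus[OF sK, of s] by simp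
  have cgeZ: "cge s Z = cge s K - 1" if "2 \<le> s"
    unfolding Z_def using cge_minus[OF sK, of s] cge_plus[of s "K - {#s#}" "replicate_mset s 1"] cge_rep1[OF that, of s] by simp
  have Z1: "s = 1 \<Longrightarrow> Z = K" unfolding Z_def using sK by simp
  show "QP m Z s"
    unfolding QP_def using P cZ cgtZs cgeZ Z1 s1 unfolding ptP_def
    by (auto simp: of_nat_diff)
  show "mcrank Z \<le> m"
  proof -
    define w where "w = count Z 1"
    have w: "w \<ge> s" using cZ unfolding w_def by auto
    have "cgt w Z \<le> cgt s Z" using w by (rule cgt_mono)
    then have "int (cgt w Z) - int w \<le> m" using P cgtZs w unfolding ptP_def by linarith
    moreover have "w \<noteq> 0" using c1 unfolding w_def by linarith
    then have "mcrank Z = int (cgt w Z) - int w" unfolding mcrank_def Let_def w_def[symmetric] by simp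
    ultimately show ?thesis by simp
  qed
  show "Z - replicate_mset s 1 + {#s#} = K" unfolding Z_def using sK by simp
qed

lemma rep_sub: "s \<le> count K x \<Longrightarrow> replicate_mset s x \<subseteq># K"
  by (auto simp: subseteq_mset_def count_replicate_mset)

lemma merge_exists:
  assumes K: "K \<in> mp n" and c1: "1 \<le> count K 1" and sz: "m + 2 \<le> int (size K)"
    and cr: "mcrank K \<le> m"
  shows "\<exists>s. QP m K s"
proof -
  have pos: "\<forall>x\<in>#K. 0 < x" using K unfolding mp_def by auto
  define T where "T = {s. 1 \<le> s \<and> (if s = 1 then int s + m < int (cge s K) else int s + m \<le> int (cge s K))}"
  have "T \<subseteq> {..size K + nat (-m)}"
  proof
    fix s assume "s \<in> T"
    then have "int s + m \<le> int (cge s K)" unfolding T_def by (auto split: if_splits)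
    moreover have "cge s K \<le> size K" by (rule cge_le_size)
    ultimately show "s \<in> {..size K + nat (-m)}" by simp
  qed
  then have fin: "finite T" by (rule finite_subset) simp
  have "1 \<in> T" unfolding T_def using sz cge_1[OF pos] by simp
  then have ne: "T \<noteq> {}" by auto
  define s where "s = Max T"
  have sT: "s \<in> T" unfolding s_def using fin ne by (rule Max_in)
  have "Suc s \<notin> T" using Max_ge[OF fin, of "Suc s"] unfolding s_def by auto
  moreover have "1 \<le> s" using sT unfolding T_def by auto
  ultimately have "\<not> (int (Suc s) + m \<le> int (cge (Suc s) K))" unfolding T_def by auto
  then have gt: "int (cgt s K) \<le> int s + m" using cge_Suc[of s K] by simp
  have "s \<le> count K 1"
  proof (rule ccontr)
    assume "\<not> s \<le> count K 1"
    define w where "w = count K 1"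
    have "w \<noteq> 0" using c1 unfolding w_def by linarith
    then have "mcrank K = int (cgt w K) - int w" unfolding mcrank_def Let_def w_def[symmetric] by simp
    then have a: "int (cgt w K) \<le> int w + m" using cr by simp
    have "s \<ge> Suc w" "s \<noteq> 1" using \<open>\<not> s \<le> count K 1\<close> \<open>w \<noteq> 0\<close> unfolding w_def by auto
    then have "int s + m \<le> int (cge s K)" "cge s K \<le> cge (Suc w) K" using sT cge_mono unfolding T_def by auto
    then show False using a cge_Suc[of w K] \<open>s \<ge> Suc w\<close> by linarith
  qed
  then have "QP m K s" using sT gt unfolding QP_def T_def by auto
  then show ?thesis by blast
qed

lemma merge_good:
  assumes K: "K \<in> mp n" and Q: "QP m K s"
  defines "Z \<equiv> K - replicate_mset s 1 + {#s#}"
  shows "Z \<in> mp n" "ptP m Z s" "Z - {#s#} + replicate_mset s 1 = K"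
proof -
  have s1: "1 \<le> s" and sc: "s \<le> count K 1" using Q unfolding QP_def by auto
  have sub: "replicate_mset s 1 \<subseteq># K" using sc by (rule rep_sub)
  define K' where "K' = K - replicate_mset s 1"
  have KK: "K = K' + replicate_mset s 1" unfolding K'_def using sub by simp
  have ZK: "Z = add_mset s K'" unfolding Z_def K'_def by simp
  have pos: "\<forall>x\<in>#K. 0 < x" and sum: "sum_mset K = n" using K unfolding mp_def by auto
  have "sum_mset Z = sum_mset K' + s" unfolding ZK by simp
  also have "sum_mset K = sum_mset K' + s" unfolding KK by simp
  finally have "sum_mset Z = n" using sum by simp
  moreover have "\<forall>x\<in>#Z. 0 < x" using pos s1 unfolding ZK KK by auto
  ultimately show "Z \<in> mp n" unfolding mp_def by simp
  have a: "cgt s Z = cgt s K" unfolding ZK using cgt_plus[of s K' "replicate_mset s 1"] cgt_rep1[OF s1, of s]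
    by (simp add: cgt_add KK)
  have b: "int s + m < int (cge s Z)"
  proof (cases "s = 1")
    case True
    then have "Z = K" unfolding ZK K'_def using sub by (simp add: subset_mset.add_diff_inverse)
    then show ?thesis using Q True unfolding QP_def by simp
  next
    case False
    then have "2 \<le> s" using s1 by simp
    then have "cge s Z = cge s K + 1" unfolding ZK
      using cge_plus[of s K' "replicate_mset s 1"] cge_rep1[of s s] by (simp add: cge_add KK)
    then show ?thesis using Q False unfolding QP_def by simp
  qed
  show "ptP m Z s" unfolding ptP_def using a b s1 Q unfolding QP_def by simp
  show "Z - {#s#} + replicate_mset s 1 = K" unfolding ZK KK by simp
qed

lemma card_split:
  "card {K \<in> mp n. \<exists>s. ptP m K s} =
   card {K \<in> mp n. 1 \<le> count K 1 \<and> m + 2 \<le> int (size K) \<and> mcrank K \<le> m}"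
proof -
  define f where "f K = K - {#THE s. ptP m K s#} + replicate_mset (THE s. ptP m K s) 1" for K
  define g where "g K = K - replicate_mset (THE s. QP m K s) 1 + {#THE s. QP m K s#}" for K
  have fA: "f K \<in> {K \<in> mp n. 1 \<le> count K 1 \<and> m + 2 \<le> int (size K) \<and> mcrank K \<le> m} \<and> g (f K) = K"
    if "K \<in> {K \<in> mp n. \<exists>s. ptP m K s}" for K
  proof -
    from that obtain s where K: "K \<in> mp n" and P: "ptP m K s" by auto
    have "(THE s. ptP m K s) = s" using P ptP_unique by blast
    then have fK: "f K = K - {#s#} + replicate_mset s 1" unfolding f_def by simp
    have Q: "QP m (f K) s" unfolding fK by (rule split_good[OF K P])
    have "(THE s'. QP m (f K) s') = s" using Q QP_unique by blast
    then have "g (f K) = K" unfolding g_def using split_good(6)[OF K P] fK by simp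
    moreover have "f K \<in> mp n \<and> 1 \<le> count (f K) 1 \<and> m + 2 \<le> int (size (f K)) \<and> mcrank (f K) \<le> m"
      unfolding fK using split_good(1-4)[OF K P] by blast
    ultimately show ?thesis by blast
  qed
  have gA: "g K \<in> {K \<in> mp n. \<exists>s. ptP m K s} \<and> f (g K) = K"
    if "K \<in> {K \<in> mp n. 1 \<le> count K 1 \<and> m + 2 \<le> int (size K) \<and> mcrank K \<le> m}" for K
  proof -
    from that have K: "K \<in> mp n" by auto
    have "\<exists>s. QP m K s" using that by (intro merge_exists[of K n m]) auto
    then obtain s where Q: "QP m K s" by blast
    have "(THE s. QP m K s) = s" using Q QP_unique by blast
    then have gK: "g K = K - replicate_mset s 1 + {#s#}" unfolding g_def by simp
    have P: "ptP m (g K) s" unfolding gK by (rule merge_good[OF K Q])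
    have "(THE s'. ptP m (g K) s') = s" using P ptP_unique by blast
    then have "f (g K) = K" unfolding f_def using merge_good(3)[OF K Q] gK by simp
    then show ?thesis using merge_good(1)[OF K Q] P gK by auto
  qed
  have "bij_betw f {K \<in> mp n. \<exists>s. ptP m K s}
     {K \<in> mp n. 1 \<le> count K 1 \<and> m + 2 \<le> int (size K) \<and> mcrank K \<le> m}"
    by (rule bij_betw_byWitness[where f'=g]) (use fA gA in blast)+
  then show ?thesis by (rule bij_betw_same_card)
qed



lemma mp_nonempty: "K \<in> mp n \<Longrightarrow> 1 \<le> n \<Longrightarrow> K \<noteq> {#}"
  unfolding mp_def by auto

lemma size_rem: "x \<in># K \<Longrightarrow> size K = Suc (size (K - {#x#}))"
  by (metis insert_DiffM size_add_mset)

lemma card_fit: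
  assumes n: "2 \<le> n"
  shows "card {K \<in> mp n. int (size K) \<le> m \<and> count K (mx K) = 1} =
         card {K \<in> mp n. 1 \<le> count K 1 \<and> int (size K) \<le> m + 1}"
proof -
  define f where "f K = add_mset 1 (add_mset (mx K - 1) (K - {#mx K#}))" for K :: "nat multiset"
  define g where "g K = add_mset (mx (K - {#1#}) + 1) ((K - {#1#}) - {#mx (K - {#1#})#})" for K :: "nat multiset"
  have fA: "f K \<in> {K \<in> mp n. 1 \<le> count K 1 \<and> int (size K) \<le> m + 1} \<and> g (f K) = K"
    if "K \<in> {K \<in> mp n. int (size K) \<le> m \<and> count K (mx K) = 1}" for K
  proof -
    from that have K: "K \<in> mp n" and sz: "int (size K) \<le> m" and c: "count K (mx K) = 1" by auto
    have pos: "\<forall>x\<in>#K. 0 < x" and sum: "sum_mset K = n" using K unfolding mp_def by auto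
    define a where "a = mx K"
    have ne: "K \<noteq> {#}" using mp_nonempty[OF K] n by simp
    have aK: "a \<in># K" unfolding a_def using ne by (rule mx_in)
    have lt: "x < a" if "x \<in># K - {#a#}" for x
    proof -
      have "x \<in># K" using that by (auto dest: in_diffD)
      then have "x \<le> a" unfolding a_def by (rule mx_ge)
      moreover have "count (K - {#a#}) a = 0" using c unfolding a_def by simp
      moreover have "x \<noteq> a" using that \<open>count (K - {#a#}) a = 0\<close> by (metis count_eq_zero_iff)
      ultimately show ?thesis by linarith
    qed
    have le': "x \<le> a - 1" if "x \<in># K - {#a#}" for x using lt[OF that] by linarith
    have a2: "2 \<le> a"
    proof (rule ccontr)
      assume "\<not> 2 \<le> a"
      have "x \<notin># K - {#a#}" for x
      proof
        assume h: "x \<in># K - {#a#}"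
        then have "x < a" "0 < x" using lt[OF h] pos in_diffD[OF h] by auto
        then show False using \<open>\<not> 2 \<le> a\<close> by linarith
      qed
      then have "set_mset (K - {#a#}) = {}" by blast
      then have "K - {#a#} = {#}" by simp
      then have "K = {#a#}" using insert_DiffM[OF aK] by simp
      then show False using sum n \<open>\<not> 2 \<le> a\<close> by simp
    qed
    have fK: "f K = add_mset 1 (add_mset (a - 1) (K - {#a#}))" unfolding f_def a_def by simp
    have "sum_mset (f K) = a + sum_mset (K - {#a#})" unfolding fK using a2 by simp
    also have "\<dots> = n" using sum sum_mset.remove[OF aK] by simp
    finally have "f K \<in> mp n" using pos a2 unfolding mp_def fK by (auto dest: in_diffD)
    moreover have "size (f K) = size K + 1" unfolding fK using size_rem[OF aK] by simp
    moreover have "g (f K) = K"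
    proof -
      have "f K - {#1#} = add_mset (a - 1) (K - {#a#})" unfolding fK by simp
      moreover have "mx (add_mset (a - 1) (K - {#a#})) = a - 1"
        by (rule mx_eqI) (use le' in auto)
      ultimately show ?thesis unfolding g_def using a2 aK by simp
    qed
    moreover have "1 \<le> count (f K) 1" unfolding fK by simp
    ultimately show ?thesis using sz by simp
  qed
  have gA: "g K \<in> {K \<in> mp n. int (size K) \<le> m \<and> count K (mx K) = 1} \<and> f (g K) = K"
    if "K \<in> {K \<in> mp n. 1 \<le> count K 1 \<and> int (size K) \<le> m + 1}" for K
  proof -
    from that have K: "K \<in> mp n" and c1: "1 \<le> count K 1" and sz: "int (size K) \<le> m + 1" by auto
    have pos: "\<forall>x\<in>#K. 0 < x" and sum: "sum_mset K = n" using K unfolding mp_def by auto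
    have oK: "1 \<in># K" using c1 by simp
    define L where "L = K - {#1#}"
    have KL: "K = add_mset 1 L" unfolding L_def using oK by simp
    have Lne: "L \<noteq> {#}" using sum n KL by auto
    define b where "b = mx L"
    have bL: "b \<in># L" unfolding b_def using Lne by (rule mx_in)
    have le: "x \<le> b" if "x \<in># L - {#b#}" for x
      using that unfolding b_def by (auto dest: in_diffD intro: mx_ge)
    have gK: "g K = add_mset (b + 1) (L - {#b#})" unfolding g_def L_def b_def by simp
    have "sum_mset (g K) = 1 + sum_mset L" unfolding gK using sum_mset.remove[OF bL] by simp
    also have "\<dots> = n" using sum KL by simp
    finally have sg: "sum_mset (g K) = n" .
    have posL: "\<forall>x\<in>#L. 0 < x" using pos KL by auto
    have "\<forall>x\<in># g K. 0 < x" unfolding gK using posL by (auto dest: in_diffD)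
    then have "g K \<in> mp n" using sg unfolding mp_def by simp
    moreover have sgz: "size (g K) = size L" unfolding gK using size_rem[OF bL] by simp
    have le2: "x \<le> b + 1" if "x \<in># L - {#b#}" for x using le[OF that] by linarith
    moreover have "mx (g K) = b + 1" unfolding gK by (rule mx_eqI) (use le2 in auto)
    moreover have "b + 1 \<notin># L - {#b#}" using le by force
    then have "count (g K) (b + 1) = 1" unfolding gK by (simp add: not_in_iff)
    moreover have "f (g K) = K"
    proof -
      have "f (g K) = add_mset 1 (add_mset b (g K - {#b+1#}))"
        unfolding f_def using \<open>mx (g K) = b + 1\<close> by simp
      also have "g K - {#b+1#} = L - {#b#}" unfolding gK by simp
      finally show ?thesis using bL KL by simp
    qed
    ultimately show ?thesis using sz KL sgz by simp
  qed
  have "bij_betw f {K \<in> mp n. int (size K) \<le> m \<and> count K (mx K) = 1}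
     {K \<in> mp n. 1 \<le> count K 1 \<and> int (size K) \<le> m + 1}"
    by (rule bij_betw_byWitness[where f'=g]) (use fA gA in blast)+
  then show ?thesis by (rule bij_betw_same_card)
qed



definition conjm :: "nat multiset \<Rightarrow> nat multiset" where
  "conjm K = image_mset (\<lambda>j. cge j K) (mset_set {1..mx K})"

lemma cge_conj: "cge k (conjm K) = card {j \<in> {1..mx K}. k \<le> cge j K}"
  unfolding conjm_def cge_def[of k] by (simp add: filter_mset_image_mset)

lemma dc_card:
  assumes "finite S" "\<And>i j. j \<in> S \<Longrightarrow> 1 \<le> i \<Longrightarrow> i \<le> j \<Longrightarrow> i \<in> S" "1 \<le> (j::nat)"
    "\<And>i. i \<in> S \<Longrightarrow> 1 \<le> i"
  shows "j \<in> S \<longleftrightarrow> j \<le> card S"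
proof
  assume "j \<in> S"
  then have "{1..j} \<subseteq> S" using assms(2) by auto
  then have "card {1..j} \<le> card S" using card_mono[OF assms(1)] by blast
  then show "j \<le> card S" by simp
next
  assume h: "j \<le> card S"
  show "j \<in> S"
  proof (rule ccontr)
    assume "j \<notin> S"
    have "S \<subseteq> {1..<j}"
    proof
      fix i assume "i \<in> S"
      then have "1 \<le> i" using assms(4) by blast
      moreover have "i < j"
      proof (rule ccontr)
        assume "\<not> i < j"
        then show False using assms(2)[OF \<open>i \<in> S\<close> assms(3)] \<open>j \<notin> S\<close> by simp
      qed
      ultimately show "i \<in> {1..<j}" by simp
    qed
    then have "card S \<le> card {1..<j}" by (rule card_mono[rotated]) simp
    also have "\<dots> < j" using assms(3) by simp
    finally show False using h by simp
  qed
qed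

lemma transpose:
  assumes pos: "\<forall>x\<in>#K. 0 < x" and j: "1 \<le> j" and k: "1 \<le> k"
  shows "j \<le> cge k (conjm K) \<longleftrightarrow> k \<le> cge j K"
proof -
  define S where "S = {j \<in> {1..mx K}. k \<le> cge j K}"
  have mem: "i \<in> S \<longleftrightarrow> k \<le> cge i K" if "1 \<le> i" for i
  proof
    assume "k \<le> cge i K"
    then have "size (filter_mset (\<lambda>x. i \<le> x) K) \<noteq> 0" using k unfolding cge_def by linarith
    then have "filter_mset (\<lambda>x. i \<le> x) K \<noteq> {#}" by auto
    then obtain x where "x \<in># filter_mset (\<lambda>x. i \<le> x) K" by (meson multiset_nonemptyE)
    then have "x \<in># K" "i \<le> x" by auto
    then have "i \<le> mx K" using mx_ge by (metis order_trans)
    then show "i \<in> S" using that \<open>k \<le> cge i K\<close> unfolding S_def by auto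
  qed (auto simp: S_def)
  have "j \<in> S \<longleftrightarrow> j \<le> card S"
  proof (rule dc_card)
    show "finite S" unfolding S_def by simp
    show "i \<in> S" if "j' \<in> S" "1 \<le> i" "i \<le> j'" for i j'
      using that cge_mono[of i j' K] mem[of i] mem[of j'] unfolding S_def by auto
    show "1 \<le> i" if "i \<in> S" for i using that unfolding S_def by auto
  qed (rule j)
  then show ?thesis using mem[OF j] cge_conj[of k K] unfolding S_def by simp
qed

lemma size_conj: "size (conjm K) = mx K"
  unfolding conjm_def by simp

lemma pos_conj: "\<forall>x\<in>#conjm K. 0 < x"
proof
  fix y assume "y \<in># conjm K"
  then obtain j where j: "j \<in> {1..mx K}" "y = cge j K" unfolding conjm_def by auto
  then have "K \<noteq> {#}" unfolding mx_def by auto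
  then have "mx K \<in># K" by (rule mx_in)
  then have "mx K \<in># filter_mset (\<lambda>x. j \<le> x) K" using j by simp
  then have "filter_mset (\<lambda>x. j \<le> x) K \<noteq> {#}" by auto
  then have "size (filter_mset (\<lambda>x. j \<le> x) K) \<noteq> 0" by (metis size_eq_0_iff_empty)
  then show "0 < y" using j(2) unfolding cge_def by (metis neq0_conv)
qed

lemma sum_cge: "(\<forall>x\<in>#K. x \<le> a) \<Longrightarrow> (\<Sum>j\<in>{1..a}. cge j K) = sum_mset K"
proof (induction K)
  case empty then show ?case by (simp add: cge_def)
next
  case (add x K)
  have "(\<Sum>j\<in>{1..a}. cge j (add_mset x K)) = (\<Sum>j\<in>{1..a}. cge j K) + (\<Sum>j\<in>{1..a}. if j \<le> x then 1 else 0)"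
    by (simp add: cge_add sum.distrib)
  also have "(\<Sum>j\<in>{1..a}. if j \<le> x then 1 else 0) = card ({1..a} \<inter> {j. j \<le> x})"
    by (simp add: sum.If_cases)
  also have "{1..a} \<inter> {j. j \<le> x} = {1..x}" using add.prems by auto
  finally show ?case using add by simp
qed

lemma sum_conj: "sum_mset (conjm K) = sum_mset K"
  unfolding conjm_def using sum_cge[of K "mx K"] by (simp add: sum_unfold_sum_mset[symmetric] mx_ge)

lemma mx_conj: "\<forall>x\<in>#K. 0 < x \<Longrightarrow> mx (conjm K) = size K"
proof (cases "K = {#}")
  case True then show ?thesis by (simp add: conjm_def mx_def)
next
  case False
  assume pos: "\<forall>x\<in>#K. 0 < x"
  have "1 \<le> mx K" using mx_in[OF False] pos by (metis One_nat_def Suc_leI)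
  show ?thesis
  proof (rule mx_eqI)
    show "size K \<in># conjm K" unfolding conjm_def using \<open>1 \<le> mx K\<close> cge_1[OF pos]
      by (auto intro!: image_eqI[where x=1])
    show "\<forall>x\<in>#conjm K. x \<le> size K" unfolding conjm_def by (auto simp: cge_le_size)
  qed
qed

lemma mset_eq_cge:
  assumes "\<forall>x\<in>#A. 0 < x" "\<forall>x\<in>#B. 0 < x" "\<And>j. 1 \<le> j \<Longrightarrow> cge j A = cge j B"
  shows "A = B"
proof (rule multiset_eqI)
  fix x
  show "count A x = count B x"
  proof (cases "x = 0")
    case True then show ?thesis using assms(1,2) by (metis count_eq_zero_iff less_irrefl)
  next
    case False
    then have "cge x A = cge x B" "cge (Suc x) A = cge (Suc x) B" using assms(3) by auto
    then show ?thesis using cge_cgt[of x A] cge_cgt[of x B] cge_Suc[of x A] cge_Suc[of x B] by simp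
  qed
qed

lemma conj_conj: "\<forall>x\<in>#K. 0 < x \<Longrightarrow> conjm (conjm K) = K"
proof (rule mset_eq_cge[OF pos_conj])
  fix j :: nat assume pos: "\<forall>x\<in>#K. 0 < x" and j: "1 \<le> j"
  have "cge j (conjm (conjm K)) = card {i \<in> {1..size K}. j \<le> cge i (conjm K)}"
    using cge_conj[of j "conjm K"] mx_conj[OF pos] by simp
  also have "{i \<in> {1..size K}. j \<le> cge i (conjm K)} = {i \<in> {1..size K}. i \<le> cge j K}"
    using transpose[OF pos j] by auto
  also have "\<dots> = {1..cge j K}" using cge_le_size[of j K] by auto
  finally show "cge j (conjm (conjm K)) = cge j K" by simp
qed

lemma conj_mp: "K \<in> mp n \<Longrightarrow> conjm K \<in> mp n"
  unfolding mp_def using pos_conj sum_conj by auto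

lemma bij_conj: "bij_betw conjm (mp n) (mp n)"
proof (rule bij_betw_byWitness[where f'=conjm])
  show "\<forall>a\<in>mp n. conjm (conjm a) = a" using conj_conj unfolding mp_def by blast
  show "\<forall>a\<in>mp n. conjm (conjm a) = a" using conj_conj unfolding mp_def by blast
  show "conjm ` mp n \<subseteq> mp n" using conj_mp by blast
  show "conjm ` mp n \<subseteq> mp n" using conj_mp by blast
qed

lemma mrank_conj: "\<forall>x\<in>#K. 0 < x \<Longrightarrow> mrank (conjm K) = - mrank K"
  unfolding mrank_def by (simp add: mx_conj size_conj)

lemma cge_mx: "cge (mx K) K = count K (mx K)"
proof -
  have "filter_mset (\<lambda>x. mx K < x) K = {#}" using mx_ge by (simp add: not_less)
  then have "cgt (mx K) K = 0" unfolding cgt_def by simp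
  then show ?thesis using cge_cgt[of "mx K" K] by simp
qed

lemma count_conj1:
  assumes pos: "\<forall>x\<in>#K. 0 < x" and ne: "K \<noteq> {#}"
  shows "count (conjm K) 1 = 0 \<longleftrightarrow> 2 \<le> count K (mx K)"
proof -
  have a: "mx K \<in># K" using ne by (rule mx_in)
  then have a1: "1 \<le> mx K" using pos by (metis One_nat_def Suc_leI)
  have "count (conjm K) 1 = 0 \<longleftrightarrow> (\<forall>j\<in>{1..mx K}. cge j K \<noteq> 1)"
  proof -
    have "count (conjm K) 1 = 0 \<longleftrightarrow> 1 \<notin> (\<lambda>j. cge j K) ` {1..mx K}"
      unfolding conjm_def by (simp add: count_eq_zero_iff)
    also have "\<dots> \<longleftrightarrow> (\<forall>j\<in>{1..mx K}. cge j K \<noteq> 1)" by force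
    finally show ?thesis .
  qed
  also have "\<dots> \<longleftrightarrow> 2 \<le> count K (mx K)"
  proof
    assume h: "\<forall>j\<in>{1..mx K}. cge j K \<noteq> 1"
    then have "cge (mx K) K \<noteq> 1" using a1 by auto
    then have "count K (mx K) \<noteq> 1" using cge_mx[of K] by simp
    moreover have "0 < count K (mx K)" using a by simp
    ultimately show "2 \<le> count K (mx K)" by arith
  next
    assume h: "2 \<le> count K (mx K)"
    show "\<forall>j\<in>{1..mx K}. cge j K \<noteq> 1"
    proof
      fix j assume "j \<in> {1..mx K}"
      then have "cge (mx K) K \<le> cge j K" by (intro cge_mono) simp
      then show "cge j K \<noteq> 1" using h cge_mx[of K] by simp
    qed
  qed
  finally show ?thesis .
qed

lemma strict_dec_skip:
  fixes g :: "nat \<Rightarrow> int"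
  assumes dec: "\<And>r. 1 \<le> r \<Longrightarrow> g (Suc r) < g r"
  shows "(\<exists>r\<ge>1. g r = m) \<longleftrightarrow> \<not> (g 1 < m \<or> (\<exists>s\<ge>1. g (Suc s) < m \<and> m < g s))"
proof -
  have mono: "g j \<le> g i - int (j - i)" if "1 \<le> i" "i \<le> j" for i j
    using that(2)
  proof (induction j rule: dec_induct)
    case base then show ?case by simp
  next
    case (step j)
    then have "g (Suc j) < g j" using dec that(1) by simp
    then show ?case using step by (simp add: Suc_diff_le)
  qed
  show ?thesis
  proof
    assume "\<exists>r\<ge>1. g r = m"
    then obtain r where r: "1 \<le> r" "g r = m" by blast
    have "\<not> g 1 < m" using mono[OF _ r(1)] r by simp
    moreover have "\<not> (g (Suc s) < m \<and> m < g s)" if "1 \<le> s" for s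
    proof (cases "s < r")
      case True
      then show ?thesis using mono[of "Suc s" r] r by auto
    next
      case False
      then show ?thesis using mono[of r s] r by auto
    qed
    ultimately show "\<not> (g 1 < m \<or> (\<exists>s\<ge>1. g (Suc s) < m \<and> m < g s))" by blast
  next
    assume h: "\<not> (g 1 < m \<or> (\<exists>s\<ge>1. g (Suc s) < m \<and> m < g s))"
    define R where "R = {r. 1 \<le> r \<and> m \<le> g r}"
    have "R \<subseteq> {..nat (g 1 - m) + 1}"
    proof
      fix r assume "r \<in> R"
      then have "1 \<le> r" "m \<le> g r" unfolding R_def by auto
      then show "r \<in> {..nat (g 1 - m) + 1}" using mono[of 1 r] by auto
    qed
    then have fin: "finite R" by (rule finite_subset) simp
    have "1 \<in> R" using h unfolding R_def by auto
    define r0 where "r0 = Max R"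
    have r0: "r0 \<in> R" unfolding r0_def using fin \<open>1 \<in> R\<close> by (intro Max_in) auto
    have "Suc r0 \<notin> R" using Max_ge[OF fin, of "Suc r0"] unfolding r0_def by auto
    then have "g (Suc r0) < m" using r0 unfolding R_def by auto
    moreover have "1 \<le> r0" "m \<le> g r0" using r0 unfolding R_def by auto
    moreover have "\<not> (g (Suc r0) < m \<and> m < g r0)" using h \<open>1 \<le> r0\<close> by blast
    ultimately have "g r0 = m" by linarith
    then show "\<exists>r\<ge>1. g r = m" using \<open>1 \<le> r0\<close> by blast
  qed
qed

lemma mrs_g:
  assumes pos: "\<forall>x\<in>#K. 0 < x"
  defines "g \<equiv> \<lambda>r. int (cge r K) - int r"
  shows "mrs m K \<longleftrightarrow> (g 1 < m \<or> (\<exists>s\<ge>1. g (Suc s) < m \<and> m < g s))"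
proof
  assume "mrs m K"
  then obtain s where s: "int (cgt s K) \<le> int s + m" "s = 0 \<or> int s + m < int (cge s K)"
    unfolding mrs_def by blast
  show "g 1 < m \<or> (\<exists>s\<ge>1. g (Suc s) < m \<and> m < g s)"
  proof (cases "s = 0")
    case True
    then show ?thesis using s cgt_0[OF pos] cge_1[OF pos] unfolding g_def by simp
  next
    case False
    then have "g (Suc s) < m \<and> m < g s" using s cge_Suc[of s K] unfolding g_def by simp
    then show ?thesis using False by (metis One_nat_def Suc_leI neq0_conv)
  qed
next
  assume "g 1 < m \<or> (\<exists>s\<ge>1. g (Suc s) < m \<and> m < g s)"
  then show "mrs m K"
  proof
    assume "g 1 < m"
    then show ?thesis unfolding mrs_def g_def using cgt_0[OF pos] cge_1[OF pos]
      by (intro exI[of _ 0]) simp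
  next
    assume "\<exists>s\<ge>1. g (Suc s) < m \<and> m < g s"
    then obtain s where "1 \<le> s" "g (Suc s) < m" "m < g s" by blast
    then show ?thesis unfolding mrs_def g_def using cge_Suc[of s K]
      by (intro exI[of _ s]) simp
  qed
qed

lemma mrs_conj:
  assumes pos: "\<forall>x\<in>#K. 0 < x" and m: "0 \<le> m"
  shows "mrs (-m-1) (conjm K) \<longleftrightarrow> (\<exists>r\<ge>1. int (cge r K) - int r = m)"
proof
  assume "mrs (-m-1) (conjm K)"
  then obtain s where s: "int (cgt s (conjm K)) \<le> int s + (-m-1)"
    "s = 0 \<or> int s + (-m-1) < int (cge s (conjm K))"
    unfolding mrs_def by blast
  have s1: "1 \<le> s" using s m by (cases "s = 0") auto
  have a: "int (cge (Suc s) (conjm K)) \<le> int s - m - 1" using s cge_Suc[of s "conjm K"] by simp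
  have b: "int s - m - 1 < int (cge s (conjm K))" using s s1 by auto
  define r where "r = nat (int s - m)"
  have r1: "1 \<le> r" and rs: "int r = int s - m" using a unfolding r_def by auto
  have "r \<le> cge s (conjm K)" using b rs by linarith
  then have c: "s \<le> cge r K" using transpose[OF pos r1 s1] by simp
  have "\<not> r \<le> cge (Suc s) (conjm K)" using a rs by linarith
  then have d: "\<not> Suc s \<le> cge r K" using transpose[OF pos r1, of "Suc s"] by simp
  have "cge r K = s" using c d by simp
  then show "\<exists>r\<ge>1. int (cge r K) - int r = m" using r1 rs by (intro exI[of _ r]) simp
next
  assume "\<exists>r\<ge>1. int (cge r K) - int r = m"
  then obtain r where r1: "1 \<le> r" and rm: "int (cge r K) - int r = m" by blast
  define s where "s = cge r K"
  have s1: "1 \<le> s" using rm r1 m unfolding s_def by linarith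
  have "r \<le> cge s (conjm K)" using transpose[OF pos r1 s1] unfolding s_def by simp
  moreover have "\<not> r \<le> cge (Suc s) (conjm K)" using transpose[OF pos r1, of "Suc s"] unfolding s_def by simp
  ultimately show "mrs (-m-1) (conjm K)" unfolding mrs_def using rm s_def cge_Suc[of s "conjm K"]
    by (intro exI[of _ s]) auto
qed

lemma mrs_compl:
  assumes pos: "\<forall>x\<in>#K. 0 < x" and m: "0 \<le> m"
  shows "mrs (-m-1) (conjm K) \<longleftrightarrow> \<not> mrs m K"
proof -
  define g where "g = (\<lambda>r. int (cge r K) - int r)"
  have dec: "g (Suc r) < g r" if "1 \<le> r" for r
    using cge_mono[of r "Suc r" K] unfolding g_def by simp
  show ?thesis
    unfolding mrs_conj[OF pos m] mrs_g[OF pos] using strict_dec_skip[of g m, OF dec] unfolding g_def by simp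
qed



lemma card_eqs:
  assumes n: "2 \<le> n"
  shows "card {K \<in> mp n. int (size K) \<le> m \<and> 2 \<le> count K (mx K)} =
         card {K \<in> mp n. count K 1 = 0 \<and> int (mx K) \<le> m}"
proof -
  have A: "conjm K \<in> {K \<in> mp n. count K 1 = 0 \<and> int (mx K) \<le> m}"
    if "K \<in> {K \<in> mp n. int (size K) \<le> m \<and> 2 \<le> count K (mx K)}" for K
  proof -
    from that have K: "K \<in> mp n" and sz: "int (size K) \<le> m" and c: "2 \<le> count K (mx K)" by auto
    have pos: "\<forall>x\<in>#K. 0 < x" using K unfolding mp_def by auto
    have ne: "K \<noteq> {#}" using mp_nonempty[OF K] n by simp
    have "count (conjm K) 1 = 0" using count_conj1[OF pos ne] c by simp
    moreover have "int (mx (conjm K)) \<le> m" using mx_conj[OF pos] sz by simp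
    ultimately show ?thesis using conj_mp[OF K] by blast
  qed
  have B: "conjm K \<in> {K \<in> mp n. int (size K) \<le> m \<and> 2 \<le> count K (mx K)}"
    if "K \<in> {K \<in> mp n. count K 1 = 0 \<and> int (mx K) \<le> m}" for K
  proof -
    from that have K: "K \<in> mp n" and c: "count K 1 = 0" and sz: "int (mx K) \<le> m" by auto
    have pos: "\<forall>x\<in>#K. 0 < x" using K unfolding mp_def by auto
    have K': "conjm K \<in> mp n" by (rule conj_mp[OF K])
    have pos': "\<forall>x\<in>#conjm K. 0 < x" by (rule pos_conj)
    have ne': "conjm K \<noteq> {#}" using mp_nonempty[OF K'] n by simp
    have "2 \<le> count (conjm K) (mx (conjm K))"
      using count_conj1[OF pos' ne'] conj_conj[OF pos] c by simp
    moreover have "int (size (conjm K)) \<le> m" using size_conj[of K] sz by simp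
    ultimately show ?thesis using K' by blast
  qed
  have "bij_betw conjm {K \<in> mp n. int (size K) \<le> m \<and> 2 \<le> count K (mx K)}
     {K \<in> mp n. count K 1 = 0 \<and> int (mx K) \<le> m}"
  proof (rule bij_betw_byWitness[where f'=conjm])
    show "\<forall>a\<in>{K \<in> mp n. int (size K) \<le> m \<and> 2 \<le> count K (mx K)}. conjm (conjm a) = a"
      using conj_conj unfolding mp_def by auto
    show "\<forall>a\<in>{K \<in> mp n. count K 1 = 0 \<and> int (mx K) \<le> m}. conjm (conjm a) = a"
      using conj_conj unfolding mp_def by auto
    show "conjm ` {K \<in> mp n. int (size K) \<le> m \<and> 2 \<le> count K (mx K)} \<subseteq>
      {K \<in> mp n. count K 1 = 0 \<and> int (mx K) \<le> m}" by (rule image_subsetI) (rule A)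
    show "conjm ` {K \<in> mp n. count K 1 = 0 \<and> int (mx K) \<le> m} \<subseteq>
      {K \<in> mp n. int (size K) \<le> m \<and> 2 \<le> count K (mx K)}" by (rule image_subsetI) (rule B)
  qed
  then show ?thesis by (rule bij_betw_same_card)
qed

lemma card3:
  assumes "finite X" "X = A \<union> B \<union> C" "A \<inter> B = {}" "A \<inter> C = {}" "B \<inter> C = {}"
  shows "card X = card A + card B + card C"
proof -
  have f: "finite A" "finite B" "finite C"
    using assms(1) unfolding assms(2) by simp_all
  have "(A \<union> B) \<inter> C = {}" using assms(4,5) by auto
  then have "card (A \<union> B \<union> C) = card (A \<union> B) + card C"
    using card_Un_disjoint[of "A \<union> B" C] f by simp
  also have "card (A \<union> B) = card A + card B" using card_Un_disjoint[of A B] f assms(3) by simp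
  finally show ?thesis using assms(2) by simp
qed

lemma dyson:
  assumes n: "2 \<le> n"
  shows "card {K \<in> mp n. mrs m K} = card {K \<in> mp n. mcrank K \<le> m}"
proof -
  have posK: "\<forall>x\<in>#K. 0 < x" if "K \<in> mp n" for K using that unfolding mp_def by auto
  have neK: "K \<noteq> {#}" if "K \<in> mp n" for K using mp_nonempty[OF that] n by simp
  have fin: "finite {K \<in> mp n. P K}" for P using finite_mp[of n] by simp
  have R: "{K \<in> mp n. mrs m K} = {K \<in> mp n. \<exists>s. ptP m K s} \<union>
      {K \<in> mp n. int (size K) \<le> m \<and> count K (mx K) = 1} \<union>
      {K \<in> mp n. int (size K) \<le> m \<and> 2 \<le> count K (mx K)}" (is "?R = ?P \<union> ?F \<union> ?E")
  proof -
    have "mrs m K \<longleftrightarrow> (\<exists>s. ptP m K s) \<or> int (size K) \<le> m" if "K \<in> mp n" for K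
    proof
      assume "mrs m K"
      then obtain s where s: "int (cgt s K) \<le> int s + m" "s = 0 \<or> int s + m < int (cge s K)"
        unfolding mrs_def by blast
      show "(\<exists>s. ptP m K s) \<or> int (size K) \<le> m"
      proof (cases "s = 0")
        case True then show ?thesis using s cgt_0[OF posK[OF that]] by simp
      next
        case False then have "ptP m K s" using s unfolding ptP_def by auto
        then show ?thesis by blast
      qed
    next
      assume "(\<exists>s. ptP m K s) \<or> int (size K) \<le> m"
      then show "mrs m K"
      proof
        assume "\<exists>s. ptP m K s" then show ?thesis unfolding ptP_def mrs_def by blast
      next
        assume "int (size K) \<le> m" then show ?thesis unfolding mrs_def
          using cgt_0[OF posK[OF that]] by (intro exI[of _ 0]) simp
      qed
    qed
    moreover have "count K (mx K) = 1 \<or> 2 \<le> count K (mx K)" if "K \<in> mp n" for K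
    proof -
      have "0 < count K (mx K)" using mx_in[OF neK[OF that]] by simp
      then show ?thesis by arith
    qed
    ultimately show ?thesis by blast
  qed
  have nP: "\<not> ptP m K s" if "int (size K) \<le> m" for K s
    using cge_le_size[of s K] that unfolding ptP_def by linarith
  have d1: "?P \<inter> ?F = {}" "?P \<inter> ?E = {}" using nP by blast+
  have d2: "?F \<inter> ?E = {}" by auto
  have C: "{K \<in> mp n. mcrank K \<le> m} =
      {K \<in> mp n. 1 \<le> count K 1 \<and> m + 2 \<le> int (size K) \<and> mcrank K \<le> m} \<union>
      {K \<in> mp n. 1 \<le> count K 1 \<and> int (size K) \<le> m + 1} \<union>
      {K \<in> mp n. count K 1 = 0 \<and> int (mx K) \<le> m}" (is "?C = ?S \<union> ?G \<union> ?N")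
  proof -
    have g: "mcrank K \<le> m" if "K \<in> mp n" "1 \<le> count K 1" "int (size K) \<le> m + 1" for K
    proof -
      define w where "w = count K 1"
      have "w \<noteq> 0" using that unfolding w_def by linarith
      then have "mcrank K = int (cgt w K) - int w" unfolding mcrank_def Let_def w_def[symmetric] by simp
      moreover have "cgt w K \<le> cgt 1 K" using that unfolding w_def by (intro cgt_mono) simp
      moreover have "cgt 1 K + count K 1 = size K" by (rule cgt_1[OF posK[OF that(1)]])
      ultimately show ?thesis using that unfolding w_def by linarith
    qed
    have nz: "mcrank K = int (mx K)" if "count K 1 = 0" for K
      using that unfolding mcrank_def by simp
    have iff: "mcrank K \<le> m \<longleftrightarrow> (1 \<le> count K 1 \<and> m + 2 \<le> int (size K) \<and> mcrank K \<le> m) \<or>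
       (1 \<le> count K 1 \<and> int (size K) \<le> m + 1) \<or> (count K 1 = 0 \<and> int (mx K) \<le> m)"
      if "K \<in> mp n" for K
    proof (cases "count K 1 = 0")
      case True then show ?thesis using nz[OF True] by simp
    next
      case False
      then have "1 \<le> count K 1" by simp
      then show ?thesis using g[OF that] False by (cases "m + 2 \<le> int (size K)") (auto simp: count_eq_zero_iff)
    qed
    show ?thesis using iff by blast
  qed
  have nn: "\<not> (1 \<le> count K 1 \<and> count K 1 = 0)" for K :: "nat multiset" by simp
  have nn2: "\<not> (m + 2 \<le> int (size K) \<and> int (size K) \<le> m + 1)" for K :: "nat multiset" by linarith
  have d3: "?S \<inter> ?G = {}" "?S \<inter> ?N = {}" "?G \<inter> ?N = {}" using nn nn2 by blast+
  have "card ?R = card ?P + card ?F + card ?E"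
    by (rule card3[OF fin R d1 d2])
  also have "\<dots> = card ?S + card ?G + card ?N"
    by (simp only: card_split[of n m] card_fit[OF n, of m] card_eqs[OF n, of m])
  also have "\<dots> = card ?C" by (rule card3[OF fin C d3, symmetric])
  finally show ?thesis .
qed



lemma sorted_filter_idx:
  assumes "sorted_wrt (\<ge>) xs" "\<And>x y. x \<ge> y \<Longrightarrow> P y \<Longrightarrow> P x" "i < length xs"
  shows "P (xs!i) \<longleftrightarrow> i < length (filter P xs)"
  using assms
proof (induction xs arbitrary: i)
  case Nil then show ?case by simp
next
  case (Cons x xs)
  show ?case
  proof (cases "P x")
    case True
    then show ?thesis using Cons by (cases i) auto
  next
    case False
    then have "filter P (x#xs) = []" using Cons.prems(1,2) by (auto simp: filter_empty_conv)
    moreover have "\<not> P ((x#xs)!i)" using False Cons.prems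
      by (metis nth_mem set_ConsD sorted_wrt.simps(2))
    ultimately show ?thesis by simp
  qed
qed

lemma part_mset: "xs \<in> partitions n \<Longrightarrow> mset xs \<in> mp n"
  unfolding partitions_def mp_def by (simp add: sum_mset_sum_list)

lemma sorted_rev_desc: "sorted_wrt (\<ge>) xs \<Longrightarrow> sorted (rev xs)"
  by (simp add: sorted_wrt_rev)

lemma inj_mset_part: "inj_on mset (partitions n)"
proof (rule inj_onI)
  fix xs ys assume "xs \<in> partitions n" "ys \<in> partitions n" "mset xs = mset ys"
  then have "sorted (rev xs)" "sorted (rev ys)" "mset (rev xs) = mset (rev ys)"
    unfolding partitions_def by (auto intro: sorted_rev_desc)
  then have "sort (rev ys) = rev xs" "sort (rev ys) = rev ys"
    using properties_for_sort by metis+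
  then show "xs = ys" by simp
qed

lemma mset_part_surj: "K \<in> mp n \<Longrightarrow> \<exists>xs\<in>partitions n. mset xs = K"
proof -
  assume K: "K \<in> mp n"
  define xs where "xs = rev (sorted_list_of_multiset K)"
  have "mset xs = K" unfolding xs_def by simp
  moreover have "sorted_wrt (\<ge>) xs" unfolding xs_def sorted_wrt_rev
    using sorted_sorted_list_of_multiset[of K] by simp
  ultimately have "xs \<in> partitions n" using K unfolding partitions_def mp_def
    by (auto simp flip: sum_mset_sum_list)
  then show ?thesis using \<open>mset xs = K\<close> by blast
qed

lemma card_transfer:
  assumes "\<And>xs. xs \<in> partitions n \<Longrightarrow> P xs \<longleftrightarrow> Q (mset xs)"
  shows "card {xs \<in> partitions n. P xs} = card {K \<in> mp n. Q K}"
proof -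
  have "inj_on mset {xs \<in> partitions n. P xs}" using inj_mset_part by (rule inj_on_subset) auto
  moreover have "mset ` {xs \<in> partitions n. P xs} = {K \<in> mp n. Q K}"
  proof
    show "mset ` {xs \<in> partitions n. P xs} \<subseteq> {K \<in> mp n. Q K}" using assms part_mset by auto
    show "{K \<in> mp n. Q K} \<subseteq> mset ` {xs \<in> partitions n. P xs}"
    proof
      fix K assume "K \<in> {K \<in> mp n. Q K}"
      then obtain xs where "xs \<in> partitions n" "mset xs = K" "Q K" using mset_part_surj by blast
      then show "K \<in> mset ` {xs \<in> partitions n. P xs}" using assms by blast
    qed
  qed
  ultimately show ?thesis by (metis card_image)
qed

lemma hd_mx: "xs \<in> partitions n \<Longrightarrow> xs \<noteq> [] \<Longrightarrow> hd xs = mx (mset xs)"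
proof -
  assume xs: "xs \<in> partitions n" and ne: "xs \<noteq> []"
  then obtain y ys where y: "xs = y # ys" by (cases xs) auto
  have "\<forall>z\<in>set ys. z \<le> y" using xs unfolding partitions_def y by auto
  then show ?thesis unfolding y by (intro mx_eqI[symmetric]) auto
qed

lemma rank_tr: "xs \<in> partitions n \<Longrightarrow> rank xs = mrank (mset xs)"
  unfolding rank_def mrank_def using hd_mx by (auto simp: mx_def)

lemma crank_tr: "xs \<in> partitions n \<Longrightarrow> crank xs = mcrank (mset xs)"
  unfolding crank_def mcrank_def cgt_def using hd_mx
  by (auto simp: count_mset Let_def mx_def simp flip: mset_filter)

lemma rs_tr:
  assumes xs: "xs \<in> partitions n"
  shows "in_rank_set m xs \<longleftrightarrow> mrs m (mset xs)"
proof -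
  have sw: "sorted_wrt (\<ge>) xs" and pos: "\<forall>x\<in>set xs. 0 < x" using xs unfolding partitions_def by auto
  have gt: "s < xs!i \<longleftrightarrow> i < cgt s (mset xs)" if "i < length xs" for s i
    unfolding cgt_def using sorted_filter_idx[OF sw _ that, of "\<lambda>x. s < x"]
    by (simp flip: mset_filter)
  have ge: "s \<le> xs!i \<longleftrightarrow> i < cge s (mset xs)" if "i < length xs" for s i
    unfolding cge_def using sorted_filter_idx[OF sw _ that, of "\<lambda>x. s \<le> x"]
    by (simp flip: mset_filter)
  have c0: "cgt 0 (mset xs) = length xs" using cgt_0[of "mset xs"] pos by simp
  show ?thesis
  proof
    assume "in_rank_set m xs"
    then consider (a) i where "i < length xs" "m = int i - int (xs ! i)" | (b) "m \<ge> int (length xs)"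
      unfolding in_rank_set_def by blast
    then show "mrs m (mset xs)"
    proof cases
      case a
      define s where "s = xs ! i"
      have s1: "s \<noteq> 0" using pos a(1) unfolding s_def by auto
      have "cgt s (mset xs) \<le> i" using gt[OF a(1), of s] unfolding s_def by simp
      moreover have "i < cge s (mset xs)" using ge[OF a(1), of s] unfolding s_def by simp
      ultimately show ?thesis unfolding mrs_def using a(2) s1 unfolding s_def[symmetric]
        by (intro exI[of _ s]) simp
    next
      case b
      then show ?thesis unfolding mrs_def using c0 by (intro exI[of _ 0]) simp
    qed
  next
    assume "mrs m (mset xs)"
    then obtain s where s: "int (cgt s (mset xs)) \<le> int s + m" "s = 0 \<or> int s + m < int (cge s (mset xs))"
      unfolding mrs_def by blast
    show "in_rank_set m xs"
    proof (cases "s = 0")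
      case True
      then show ?thesis using s c0 unfolding in_rank_set_def by simp
    next
      case False
      define i where "i = nat (int s + m)"
      have ii: "int i = int s + m" unfolding i_def using s(1) by simp
      have "i < cge s (mset xs)" using s False ii by simp
      moreover have "cge s (mset xs) \<le> length xs" using cge_le_size[of s "mset xs"] by simp
      ultimately have il: "i < length xs" by simp
      have "s \<le> xs!i" using ge[OF il] \<open>i < cge s (mset xs)\<close> by simp
      moreover have "\<not> s < xs!i" using gt[OF il] s(1) ii by simp
      ultimately have "xs!i = s" by simp
      then show ?thesis unfolding in_rank_set_def using il ii by (intro disjI1 exI[of _ i]) simp
    qed
  qed
qed



lemma fiber_sum:
  assumes "finite R" and that: "finite X"
  shows "(\<Sum>r\<in>R. card {x \<in> X. f x = r}) = card {x \<in> X. f x \<in> R}"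
  using assms(1)
proof (induction R rule: finite_induct)
  case empty then show ?case by simp
next
  case (insert r R)
  have "{x \<in> X. f x \<in> insert r R} = {x \<in> X. f x = r} \<union> {x \<in> X. f x \<in> R}" by auto
  moreover have "card ({x \<in> X. f x = r} \<union> {x \<in> X. f x \<in> R}) = card {x \<in> X. f x = r} + card {x \<in> X. f x \<in> R}"
    by (rule card_Un_disjoint) (use that insert.hyps(2) in auto)
  ultimately show ?case using insert by simp
qed

lemma card_compl:
  assumes "finite X"
  shows "card {x \<in> X. P x} + card {x \<in> X. \<not> P x} = card X"
proof -
  have "X = {x \<in> X. P x} \<union> {x \<in> X. \<not> P x}" by auto
  moreover have "card ({x \<in> X. P x} \<union> {x \<in> X. \<not> P x}) = card {x \<in> X. P x} + card {x \<in> X. \<not> P x}"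
    by (rule card_Un_disjoint) (use assms in auto)
  ultimately show ?thesis by simp
qed

lemma card_conj: "card {K \<in> mp n. Q (conjm K)} = card {K \<in> mp n. Q K}"
proof -
  have "inj_on conjm {K \<in> mp n. Q (conjm K)}"
    using bij_betw_imp_inj_on[OF bij_conj[of n]] by (rule inj_on_subset) auto
  moreover have "conjm ` {K \<in> mp n. Q (conjm K)} = {K \<in> mp n. Q K}"
  proof
    show "conjm ` {K \<in> mp n. Q (conjm K)} \<subseteq> {K \<in> mp n. Q K}" using conj_mp by auto
    show "{K \<in> mp n. Q K} \<subseteq> conjm ` {K \<in> mp n. Q (conjm K)}"
    proof
      fix K assume K: "K \<in> {K \<in> mp n. Q K}"
      then have "conjm (conjm K) = K" using conj_conj unfolding mp_def by auto
      moreover have "conjm K \<in> {K \<in> mp n. Q (conjm K)}" using K conj_mp \<open>conjm (conjm K) = K\<close> by auto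
      ultimately show "K \<in> conjm ` {K \<in> mp n. Q (conjm K)}" by (metis image_eqI)
    qed
  qed
  ultimately show ?thesis by (metis card_image)
qed

theorem theorem1p3:
  fixes m :: int and n :: nat
  assumes "m \<ge> 0" and "n > 1"
  shows "int (N_le m n) - int (M_le m n) = 2 * (int (p_rank_ge (-m) n) - int (q m n))"
proof -
  have n2: "2 \<le> n" using assms(2) by simp
  define X where "X = mp n"
  have fin: "finite X" unfolding X_def by (rule finite_mp)
  define a where "a P = card {K \<in> X. P K}" for P
  have pos: "\<forall>x\<in>#K. 0 < x" if "K \<in> X" for K using that unfolding X_def mp_def by auto
  have Nr: "N r n = a (\<lambda>K. mrank K = r)" for r
    unfolding N_def a_def X_def by (rule card_transfer) (simp add: rank_tr)
  have Nle: "N_le m n = a (\<lambda>K. mrank K \<in> {-m..m})"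
    unfolding N_le_def Nr a_def by (rule fiber_sum) (simp_all add: fin)
  have sym: "a (\<lambda>K. mrank K > m) = a (\<lambda>K. mrank K < -m)"
  proof -
    have "a (\<lambda>K. mrank K < -m) = card {K \<in> mp n. mrank (conjm K) > m}"
      unfolding a_def X_def
      by (rule arg_cong[where f=card]) (auto simp: mrank_conj mp_def)
    also have "\<dots> = a (\<lambda>K. mrank K > m)" unfolding a_def X_def by (rule card_conj)
    finally show ?thesis by simp
  qed
  have r3: "card X = a (\<lambda>K. mrank K \<in> {-m..m}) + a (\<lambda>K. mrank K > m) + a (\<lambda>K. mrank K < -m)"
    unfolding a_def by (rule card3[OF fin]) (use assms(1) in auto)
  have prg: "p_rank_ge (-m) n = card X - a (\<lambda>K. mrank K < -m)"
  proof -
    have "p_rank_ge (-m) n = a (\<lambda>K. \<not> mrank K < -m)"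
      unfolding p_rank_ge_def a_def X_def by (rule card_transfer) (auto simp: rank_tr)
    then show ?thesis using card_compl[OF fin, of "\<lambda>K. mrank K < -m"] unfolding a_def by simp
  qed
  have Mr: "M r n = a (\<lambda>K. mcrank K = r)" for r
    unfolding M_def a_def X_def by (rule card_transfer) (simp add: crank_tr)
  have Mle: "M_le m n = a (\<lambda>K. mcrank K \<in> {-m..m})"
    unfolding M_le_def Mr a_def by (rule fiber_sum) (simp_all add: fin)
  have c2: "a (\<lambda>K. mcrank K \<le> m) = a (\<lambda>K. mcrank K \<in> {-m..m}) + a (\<lambda>K. mcrank K \<le> -m-1)"
  proof -
    have "{K \<in> X. mcrank K \<le> m} = {K \<in> X. mcrank K \<in> {-m..m}} \<union> {K \<in> X. mcrank K \<le> -m-1}"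
      using assms(1) by auto
    moreover have "card ({K \<in> X. mcrank K \<in> {-m..m}} \<union> {K \<in> X. mcrank K \<le> -m-1}) =
        card {K \<in> X. mcrank K \<in> {-m..m}} + card {K \<in> X. mcrank K \<le> -m-1}"
      by (rule card_Un_disjoint) (use fin in auto)
    ultimately show ?thesis unfolding a_def by simp
  qed
  have q: "q m n = a (mrs m)"
    unfolding q_def a_def X_def by (rule card_transfer) (simp add: rs_tr)
  have d1: "a (\<lambda>K. mcrank K \<le> m) = a (mrs m)"
    unfolding a_def X_def using dyson[OF n2, of m] by simp
  have d2: "a (\<lambda>K. mcrank K \<le> -m-1) = card X - a (mrs m)"
  proof -
    have "a (\<lambda>K. mcrank K \<le> -m-1) = a (mrs (-m-1))"
      unfolding a_def X_def using dyson[OF n2, of "-m-1"] by simp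
    also have "\<dots> = card {K \<in> mp n. mrs (-m-1) (conjm K)}"
      unfolding a_def X_def using card_conj[where Q="mrs (-m-1)" and n=n] by simp
    also have "\<dots> = a (\<lambda>K. \<not> mrs m K)"
      unfolding a_def X_def using mrs_compl[OF _ assms(1)] unfolding mp_def
      by (intro arg_cong[where f=card]) auto
    finally show ?thesis using card_compl[OF fin, of "mrs m"] unfolding a_def by simp
  qed
  have "a (mrs m) \<le> card X" using card_compl[OF fin, of "mrs m"] unfolding a_def by simp
  have "a (\<lambda>K. mrank K < -m) \<le> card X" using r3 by simp
  show ?thesis
    unfolding Nle Mle prg q using r3 sym c2 d1 d2 \<open>a (mrs m) \<le> card X\<close> \<open>a (\<lambda>K. mrank K < -m) \<le> card X\<close>
    by (simp add: of_nat_diff)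
qed


end
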